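(* Let $A$ be a commutative ring, $E$ a non-zero $A$-module and $R=A\propto E$ the trivial ring extension of $A$ by $E$. Then $R$ is a chain ring if and only if $A$ is a valuation domain and $E$ is a uniserial divisible $A$-module.
   Context: All rings are commutative with identity. The trivial ring extension $R=A\propto E$ is the ring with underlying additive group $A\times E$ and multiplication $(a,e)(a',e')=(aa',ae'+a'e)$. A module is uniserial if its submodules are totally ordered by inclusion; a ring is a chain ring if it is uniserial as a module over itself. A module $E$ over a domain $A$ is divisible if $aE=E$ for every non-zero $a\in A$. *)

theory Defs
  imports "HOL-Algebra.Algebra"
begin

definition trivial_ext ::
  "('a, 'c) ring_scheme \<Rightarrow> ('a, 'b, 'd) module_scheme \<Rightarrow> ('a \<times> 'b) ring" where
  "trivial_ext A E =
    \<lparr>carrier = carrier A \<times> carrier E,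
     monoid.mult = (\<lambda>x y. (fst x \<otimes>\<^bsub>A\<^esub> fst y,
                     (fst x \<odot>\<^bsub>E\<^esub> snd y) \<oplus>\<^bsub>E\<^esub> (fst y \<odot>\<^bsub>E\<^esub> snd x))),
     one = (\<one>\<^bsub>A\<^esub>, \<zero>\<^bsub>E\<^esub>),
     ring.zero = (\<zero>\<^bsub>A\<^esub>, \<zero>\<^bsub>E\<^esub>),
     ring.add = (\<lambda>x y. (fst x \<oplus>\<^bsub>A\<^esub> fst y, snd x \<oplus>\<^bsub>E\<^esub> snd y))\<rparr>"

definition uniserial :: "('a, 'c) ring_scheme \<Rightarrow> ('a, 'b, 'd) module_scheme \<Rightarrow> bool" where
  "uniserial A E \<longleftrightarrow>
    (\<forall>H K. submodule H A E \<and> submodule K A E \<longrightarrow> H \<subseteq> K \<or> K \<subseteq> H)"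

text \<open>A (commutative) ring is a chain ring if it is uniserial over itself, i.e. its
  ideals (= submodules of the regular module) are totally ordered by inclusion.\<close>
definition chain_ring :: "('a, 'c) ring_scheme \<Rightarrow> bool" where
  "chain_ring R \<longleftrightarrow> (\<forall>I J. ideal I R \<and> ideal J R \<longrightarrow> I \<subseteq> J \<or> J \<subseteq> I)"

definition valuation_domain :: "('a, 'c) ring_scheme \<Rightarrow> bool" where
  "valuation_domain A \<longleftrightarrow> domain A \<and>
    (\<forall>a\<in>carrier A. \<forall>b\<in>carrier A. a divides\<^bsub>A\<^esub> b \<or> b divides\<^bsub>A\<^esub> a)"

definition divisible :: "('a, 'c) ring_scheme \<Rightarrow> ('a, 'b, 'd) module_scheme \<Rightarrow> bool" where
  "divisible A E \<longleftrightarrow>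
    (\<forall>a\<in>carrier A - {\<zero>\<^bsub>A\<^esub>}. (\<lambda>x. a \<odot>\<^bsub>E\<^esub> x) ` carrier E = carrier E)"

end

theory Submission imports Defs begin

lemma te_simps:
  "carrier (trivial_ext A E) = carrier A \<times> carrier E"
  "(x \<otimes>\<^bsub>trivial_ext A E\<^esub> y) = (fst x \<otimes>\<^bsub>A\<^esub> fst y, (fst x \<odot>\<^bsub>E\<^esub> snd y) \<oplus>\<^bsub>E\<^esub> (fst y \<odot>\<^bsub>E\<^esub> snd x))"
  "\<one>\<^bsub>trivial_ext A E\<^esub> = (\<one>\<^bsub>A\<^esub>, \<zero>\<^bsub>E\<^esub>)"
  "\<zero>\<^bsub>trivial_ext A E\<^esub> = (\<zero>\<^bsub>A\<^esub>, \<zero>\<^bsub>E\<^esub>)"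
  "(x \<oplus>\<^bsub>trivial_ext A E\<^esub> y) = (fst x \<oplus>\<^bsub>A\<^esub> fst y, snd x \<oplus>\<^bsub>E\<^esub> snd y)"
  by (simp_all add: trivial_ext_def)

lemma (in module) smult_left_commute:
  "a \<in> carrier R \<Longrightarrow> b \<in> carrier R \<Longrightarrow> x \<in> carrier M \<Longrightarrow>
   a \<odot>\<^bsub>M\<^esub> (b \<odot>\<^bsub>M\<^esub> x) = b \<odot>\<^bsub>M\<^esub> (a \<odot>\<^bsub>M\<^esub> x)"
  by (metis smult_assoc1 R.m_comm)

lemma (in module) te_cring: "cring (trivial_ext R M)"
proof (rule cringI)
  show "abelian_group (trivial_ext R M)"
  proof (rule abelian_groupI)
    fix x assume x: "x \<in> carrier (trivial_ext R M)"
    show "\<exists>y\<in>carrier (trivial_ext R M). y \<oplus>\<^bsub>trivial_ext R M\<^esub> x = \<zero>\<^bsub>trivial_ext R M\<^esub>"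
      using x by (intro bexI[of _ "(\<ominus> fst x, \<ominus>\<^bsub>M\<^esub> snd x)"]) (auto simp: te_simps R.l_neg M.l_neg)
  qed (auto simp: te_simps R.a_ac M.a_ac)
  show "comm_monoid (trivial_ext R M)"
  proof (rule comm_monoidI)
    fix x y z assume x: "x \<in> carrier (trivial_ext R M)" and y: "y \<in> carrier (trivial_ext R M)"
      and z: "z \<in> carrier (trivial_ext R M)"
    show "x \<otimes>\<^bsub>trivial_ext R M\<^esub> y \<otimes>\<^bsub>trivial_ext R M\<^esub> z = x \<otimes>\<^bsub>trivial_ext R M\<^esub> (y \<otimes>\<^bsub>trivial_ext R M\<^esub> z)"
      using x y z by (auto simp: te_simps R.m_ac M.a_ac smult_r_distr smult_assoc1 R.m_comm smult_left_commute)
  qed (auto simp: te_simps R.m_ac M.a_ac)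
next
  fix x y z assume "x \<in> carrier (trivial_ext R M)" "y \<in> carrier (trivial_ext R M)"
      "z \<in> carrier (trivial_ext R M)"
  then show "(x \<oplus>\<^bsub>trivial_ext R M\<^esub> y) \<otimes>\<^bsub>trivial_ext R M\<^esub> z =
     x \<otimes>\<^bsub>trivial_ext R M\<^esub> z \<oplus>\<^bsub>trivial_ext R M\<^esub> y \<otimes>\<^bsub>trivial_ext R M\<^esub> z"
    by (auto simp: te_simps R.l_distr M.a_ac smult_r_distr smult_l_distr)
qed

context module
begin

abbreviation "T \<equiv> trivial_ext R M"

lemma te_neg: "a \<in> carrier R \<Longrightarrow> e \<in> carrier M \<Longrightarrow> \<ominus>\<^bsub>T\<^esub> (a, e) = (\<ominus> a, \<ominus>\<^bsub>M\<^esub> e)"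
proof -
  interpret T: cring T by (rule te_cring)
  assume "a \<in> carrier R" "e \<in> carrier M"
  then show ?thesis
    by (intro T.minus_equality) (auto simp: te_simps R.l_neg M.l_neg)
qed

lemma ideal_fill:
  assumes I: "ideal I T" and p: "(a, e) \<in> I" and a: "a \<noteq> \<zero>" and div: "divisible R M"
    and x: "x \<in> carrier M"
  shows "(\<zero>, x) \<in> I"
proof -
  interpret I: ideal I T by (rule I)
  have ae: "a \<in> carrier R" "e \<in> carrier M" using I.a_subset p by (auto simp: te_simps)
  have "x \<in> (\<lambda>y. a \<odot>\<^bsub>M\<^esub> y) ` carrier M" using div a ae x unfolding divisible_def by auto
  then obtain f where f: "f \<in> carrier M" "x = a \<odot>\<^bsub>M\<^esub> f" by auto
  have "(\<zero>, f) \<otimes>\<^bsub>T\<^esub> (a, e) \<in> I" using p f by (intro I.I_l_closed) (auto simp: te_simps)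
  also have "(\<zero>, f) \<otimes>\<^bsub>T\<^esub> (a, e) = (\<zero>, x)" using f ae by (simp add: te_simps)
  finally show ?thesis .
qed

lemma ideal_mult_fill:
  assumes I: "ideal I T" and p: "(a, e) \<in> I" and a: "a \<noteq> \<zero>" and div: "divisible R M"
    and c: "c \<in> carrier R" and f: "f \<in> carrier M"
  shows "(a \<otimes> c, f) \<in> I"
proof -
  interpret I: ideal I T by (rule I)
  have ae: "a \<in> carrier R" "e \<in> carrier M" using I.a_subset p by (auto simp: te_simps)
  have 1: "(c, \<zero>\<^bsub>M\<^esub>) \<otimes>\<^bsub>T\<^esub> (a, e) \<in> I" using p c by (intro I.I_l_closed) (auto simp: te_simps)
  have 2: "(\<zero>, f \<ominus>\<^bsub>M\<^esub> (c \<odot>\<^bsub>M\<^esub> e)) \<in> I"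
    using ideal_fill[OF I p a div] ae c f by auto
  have "(c, \<zero>\<^bsub>M\<^esub>) \<otimes>\<^bsub>T\<^esub> (a, e) \<oplus>\<^bsub>T\<^esub> (\<zero>, f \<ominus>\<^bsub>M\<^esub> (c \<odot>\<^bsub>M\<^esub> e)) \<in> I"
    using 1 2 by simp
  also have "(c, \<zero>\<^bsub>M\<^esub>) \<otimes>\<^bsub>T\<^esub> (a, e) \<oplus>\<^bsub>T\<^esub> (\<zero>, f \<ominus>\<^bsub>M\<^esub> (c \<odot>\<^bsub>M\<^esub> e)) = (a \<otimes> c, f)"
    using ae c f by (simp add: te_simps R.m_comm a_minus_def M.a_ac M.r_neg)
  finally show ?thesis .
qed

lemma ideal_sub:
  assumes I: "ideal I T"
  shows "submodule {x \<in> carrier M. (\<zero>, x) \<in> I} R M"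
proof -
  interpret I: ideal I T by (rule I)
  show ?thesis
  proof (rule submoduleI)
    show "\<zero>\<^bsub>M\<^esub> \<in> {x \<in> carrier M. (\<zero>, x) \<in> I}"
    proof -
      have "\<zero>\<^bsub>T\<^esub> \<in> I" by simp
      then show ?thesis by (simp add: te_simps)
    qed
  next
    fix x assume "x \<in> {x \<in> carrier M. (\<zero>, x) \<in> I}"
    then have x: "x \<in> carrier M" "(\<zero>, x) \<in> I" by auto
    have "\<ominus>\<^bsub>T\<^esub> (\<zero>, x) \<in> I" using x by auto
    then show "\<ominus>\<^bsub>M\<^esub> x \<in> {x \<in> carrier M. (\<zero>, x) \<in> I}" using x by (simp add: te_neg)
  next
    fix x y assume "x \<in> {x \<in> carrier M. (\<zero>, x) \<in> I}" "y \<in> {x \<in> carrier M. (\<zero>, x) \<in> I}"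
    then have "(\<zero>, x) \<oplus>\<^bsub>T\<^esub> (\<zero>, y) \<in> I" "x \<in> carrier M" "y \<in> carrier M" by auto
    then show "x \<oplus>\<^bsub>M\<^esub> y \<in> {x \<in> carrier M. (\<zero>, x) \<in> I}" by (simp add: te_simps)
  next
    fix r x assume r: "r \<in> carrier R" and "x \<in> {x \<in> carrier M. (\<zero>, x) \<in> I}"
    then have x: "x \<in> carrier M" "(\<zero>, x) \<in> I" by auto
    have "(r, \<zero>\<^bsub>M\<^esub>) \<otimes>\<^bsub>T\<^esub> (\<zero>, x) \<in> I" using x r by (intro I.I_l_closed) (auto simp: te_simps)
    then show "r \<odot>\<^bsub>M\<^esub> x \<in> {x \<in> carrier M. (\<zero>, x) \<in> I}" using x r by (simp add: te_simps)
  qed auto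
qed

lemma chain_key:
  assumes ch: "chain_ring T" and p: "p \<in> carrier T" and q: "q \<in> carrier T"
  shows "(\<exists>x\<in>carrier T. p = x \<otimes>\<^bsub>T\<^esub> q) \<or> (\<exists>x\<in>carrier T. q = x \<otimes>\<^bsub>T\<^esub> p)"
proof -
  interpret T: cring T by (rule te_cring)
  have "cgenideal T p \<subseteq> cgenideal T q \<or> cgenideal T q \<subseteq> cgenideal T p"
    using ch T.cgenideal_ideal p q unfolding chain_ring_def by blast
  then show ?thesis using T.cgenideal_self[OF p] T.cgenideal_self[OF q] unfolding cgenideal_def by blast
qed

lemma chain_div:
  assumes ch: "chain_ring T"
  shows "divisible R M"
  unfolding divisible_def
proof (intro ballI equalityI subsetI)
  fix a y assume a: "a \<in> carrier R - {\<zero>}" and "y \<in> (\<lambda>x. a \<odot>\<^bsub>M\<^esub> x) ` carrier M"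
  then show "y \<in> carrier M" by auto
next
  fix a e assume a: "a \<in> carrier R - {\<zero>}" and e: "e \<in> carrier M"
  have "(\<exists>x\<in>carrier T. (a, \<zero>\<^bsub>M\<^esub>) = x \<otimes>\<^bsub>T\<^esub> (\<zero>, e)) \<or> (\<exists>x\<in>carrier T. (\<zero>, e) = x \<otimes>\<^bsub>T\<^esub> (a, \<zero>\<^bsub>M\<^esub>))"
    using a e by (intro chain_key ch) (auto simp: te_simps)
  then show "e \<in> (\<lambda>x. a \<odot>\<^bsub>M\<^esub> x) ` carrier M"
    using a e by (auto simp: te_simps)
qed

lemma chain_uni:
  assumes ch: "chain_ring T"
  shows "uniserial R M"
  unfolding uniserial_def
proof (intro allI impI)
  fix H K assume HK: "submodule H R M \<and> submodule K R M"
  then interpret H: submodule H R M by simp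
  interpret K: submodule K R M using HK by simp
  have H: "H \<subseteq> carrier M" using submoduleE(1) HK by blast
  have K: "K \<subseteq> carrier M" using submoduleE(1) HK by blast
  show "H \<subseteq> K \<or> K \<subseteq> H"
  proof (rule ccontr)
    assume "\<not> ?thesis"
    then obtain h k where hk: "h \<in> H" "h \<notin> K" "k \<in> K" "k \<notin> H" by blast
    have "(\<exists>x\<in>carrier T. (\<zero>, h) = x \<otimes>\<^bsub>T\<^esub> (\<zero>, k)) \<or> (\<exists>x\<in>carrier T. (\<zero>, k) = x \<otimes>\<^bsub>T\<^esub> (\<zero>, h))"
      using hk H K by (intro chain_key ch) (auto simp: te_simps)
    then show False
      using hk H K by (auto simp: te_simps)
  qed
qed

lemma chain_divides:
  assumes ch: "chain_ring T" and a: "a \<in> carrier R" and b: "b \<in> carrier R"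
  shows "a divides\<^bsub>R\<^esub> b \<or> b divides\<^bsub>R\<^esub> a"
proof -
  have "(\<exists>x\<in>carrier T. (a, \<zero>\<^bsub>M\<^esub>) = x \<otimes>\<^bsub>T\<^esub> (b, \<zero>\<^bsub>M\<^esub>)) \<or> (\<exists>x\<in>carrier T. (b, \<zero>\<^bsub>M\<^esub>) = x \<otimes>\<^bsub>T\<^esub> (a, \<zero>\<^bsub>M\<^esub>))"
    using a b by (intro chain_key ch) (auto simp: te_simps)
  then show ?thesis
    using a b unfolding factor_def by (auto simp: te_simps R.m_comm)
qed

lemma chain_domain:
  assumes ch: "chain_ring T" and nz: "carrier M \<noteq> {\<zero>\<^bsub>M\<^esub>}"
  shows "domain R"
proof (intro domain.intro is_cring domain_axioms.intro)
  obtain e0 where e0: "e0 \<in> carrier M" "e0 \<noteq> \<zero>\<^bsub>M\<^esub>" using nz M.zero_closed by blast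
  show "\<one> \<noteq> \<zero>"
  proof
    assume "\<one> = \<zero>"
    then have "\<one> \<odot>\<^bsub>M\<^esub> e0 = \<zero> \<odot>\<^bsub>M\<^esub> e0" by simp
    then show False using e0 by simp
  qed
  fix a b assume ab: "a \<otimes> b = \<zero>" "a \<in> carrier R" "b \<in> carrier R"
  show "a = \<zero> \<or> b = \<zero>"
  proof (rule ccontr)
    assume "\<not> ?thesis"
    then have na: "a \<noteq> \<zero>" "b \<noteq> \<zero>" by auto
    have div: "divisible R M" by (rule chain_div[OF ch])
    have "e0 \<in> (\<lambda>x. a \<odot>\<^bsub>M\<^esub> x) ` carrier M" using div na ab e0 unfolding divisible_def by auto
    then obtain g where g: "g \<in> carrier M" "e0 = a \<odot>\<^bsub>M\<^esub> g" by auto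
    have "g \<in> (\<lambda>x. b \<odot>\<^bsub>M\<^esub> x) ` carrier M" using div na ab g unfolding divisible_def by auto
    then obtain f where f: "f \<in> carrier M" "g = b \<odot>\<^bsub>M\<^esub> f" by auto
    have "e0 = (a \<otimes> b) \<odot>\<^bsub>M\<^esub> f" using g f ab(2,3) by (simp add: smult_assoc1)
    then show False using ab f e0 by simp
  qed
qed

lemma forward:
  assumes ch: "chain_ring T" and nz: "carrier M \<noteq> {\<zero>\<^bsub>M\<^esub>}"
  shows "valuation_domain R \<and> uniserial R M \<and> divisible R M"
  using chain_domain[OF ch nz] chain_uni[OF ch] chain_div[OF ch] chain_divides[OF ch]
  unfolding valuation_domain_def by blast

lemma backward:
  assumes vd: "valuation_domain R" and uni: "uniserial R M" and div: "divisible R M"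
  shows "chain_ring T"
  unfolding chain_ring_def
proof (intro allI impI)
  fix I J assume IJ: "ideal I T \<and> ideal J T"
  then have I: "ideal I T" and J: "ideal J T" by auto
  interpret I: ideal I T by (rule I)
  interpret J: ideal J T by (rule J)
  show "I \<subseteq> J \<or> J \<subseteq> I"
  proof (rule ccontr)
    assume "\<not> ?thesis"
    then obtain p q where pq: "p \<in> I" "p \<notin> J" "q \<in> J" "q \<notin> I" by blast
    obtain a e where p: "p = (a, e)" by (cases p)
    obtain b f where q: "q = (b, f)" by (cases q)
    have ae: "a \<in> carrier R" "e \<in> carrier M" using pq p I.a_subset by (auto simp: te_simps)
    have bf: "b \<in> carrier R" "f \<in> carrier M" using pq q J.a_subset by (auto simp: te_simps)
    show False
    proof (cases "a = \<zero>")
      case a0: True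
      show False
      proof (cases "b = \<zero>")
        case b0: True
        have "{x \<in> carrier M. (\<zero>, x) \<in> I} \<subseteq> {x \<in> carrier M. (\<zero>, x) \<in> J} \<or>
              {x \<in> carrier M. (\<zero>, x) \<in> J} \<subseteq> {x \<in> carrier M. (\<zero>, x) \<in> I}"
          using uni ideal_sub[OF I] ideal_sub[OF J] unfolding uniserial_def by blast
        then show False using pq p q a0 b0 ae bf by blast
      next
        case b0: False
        have "(\<zero>, e) \<in> J" using ideal_fill[OF J pq(3)[unfolded q] b0 div ae(2)] .
        then show False using pq p a0 by simp
      qed
    next
      case a0: False
      show False
      proof (cases "b = \<zero>")
        case b0: True
        have "(\<zero>, f) \<in> I" using ideal_fill[OF I pq(1)[unfolded p] a0 div bf(2)] .
        then show False using pq q b0 by simp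
      next
        case b0: False
        have "a divides\<^bsub>R\<^esub> b \<or> b divides\<^bsub>R\<^esub> a" using vd ae bf unfolding valuation_domain_def by blast
        then show False
        proof
          assume "a divides\<^bsub>R\<^esub> b"
          then obtain c where c: "c \<in> carrier R" "b = a \<otimes> c" unfolding factor_def by blast
          have "(a \<otimes> c, f) \<in> I" using ideal_mult_fill[OF I pq(1)[unfolded p] a0 div c(1) bf(2)] .
          then show False using pq q c by simp
        next
          assume "b divides\<^bsub>R\<^esub> a"
          then obtain c where c: "c \<in> carrier R" "a = b \<otimes> c" unfolding factor_def by blast
          have "(b \<otimes> c, e) \<in> J" using ideal_mult_fill[OF J pq(3)[unfolded q] b0 div c(1) ae(2)] .
          then show False using pq p c by simp
        qed
      qed
    qed
  qed
qed

end

theorem proposition1p1: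
  fixes A :: "('a, 'c) ring_scheme" and E :: "('a, 'b, 'd) module_scheme"
  assumes "module A E"
    and "carrier E \<noteq> {\<zero>\<^bsub>E\<^esub>}"
  shows "chain_ring (trivial_ext A E) \<longleftrightarrow>
           valuation_domain A \<and> uniserial A E \<and> divisible A E"
  using module.forward[OF assms(1) _ assms(2)] module.backward[OF assms(1)] by blast

end
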